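(* Let $\Delta\ge 4$ be even, $\phi=\pi/\Delta$, and for $j\in\{0,1,\dots,\Delta/2-1\}$ let $$|j_+\rangle=\tfrac{1}{\sqrt2}\big(|0\rangle+e^{ij\phi}|1\rangle\big),\qquad |j_-\rangle=\tfrac{1}{\sqrt2}\big(|0\rangle-e^{ij\phi}|1\rangle\big).$$ Then for all $j\neq k$ in $\{0,\dots,\Delta/2-1\}$ and all signs $s,t\in\{+,-\}$, the probability of observing the outcome $j_s$ when the state $|k_t\rangle$ is measured in the basis $M(j)=\{|j_+\rangle,|j_-\rangle\}$ satisfies $$|\langle j_s|k_t\rangle|^2\le\cos^2\!\left(\frac{\pi}{2\Delta}\right).$$
   Context: Here $i$ in the exponent denotes the imaginary unit, $|0\rangle,|1\rangle$ the computational basis of a qubit, and measuring a state $|\psi\rangle$ in the orthonormal basis $M(j)$ yields outcome $j_s$ with probability $|\langle j_s|\psi\rangle|^2$. *)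

theory Defs
  imports "HOL-Analysis.Analysis"
begin

text \<open>A single-qubit state is represented by its pair of amplitudes
  (coefficient of |0>, coefficient of |1>).\<close>
type_synonym qubit = "complex \<times> complex"

definition braket :: "qubit \<Rightarrow> qubit \<Rightarrow> complex" where
  "braket u v = cnj (fst u) * fst v + cnj (snd u) * snd v"

definition basis_state :: "nat \<Rightarrow> nat \<Rightarrow> bool \<Rightarrow> qubit" where
  "basis_state \<Delta> j s =
     (complex_of_real (1 / sqrt 2),
      (if s then 1 else -1) * complex_of_real (1 / sqrt 2)
        * exp (\<i> * complex_of_real (real j * (pi / real \<Delta>))))"

end

theory Submission
  imports Defs
begin

lemma bk:
  fixes c :: real
  assumes "c = 1 \<or> c = -1"
  shows "(cmod ((1 + complex_of_real c * cis x) / 2))\<^sup>2 = (1 + c * cos x) / 2"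
proof -
  have "(cmod ((1 + complex_of_real c * cis x) / 2))\<^sup>2
     = ((1 + c * cos x)/2)\<^sup>2 + (c * sin x / 2)\<^sup>2"
    unfolding cmod_power2 by (simp add: cis.code power_divide)
  also have "\<dots> = (1 + c * cos x) / 2" using assms
    using sin_cos_squared_add3[of x] by (auto simp: power2_eq_square field_simps; linarith)
  finally show ?thesis .
qed

theorem lemma7:
  fixes \<Delta> j k :: nat and s t :: bool
  assumes "\<Delta> \<ge> 4" and "even \<Delta>"
    and "j < \<Delta> div 2" and "k < \<Delta> div 2" and "j \<noteq> k"
  shows "(cmod (braket (basis_state \<Delta> j s) (basis_state \<Delta> k t)))\<^sup>2
           \<le> (cos (pi / (2 * real \<Delta>)))\<^sup>2"
proof -
  define \<phi> where "\<phi> = pi / real \<Delta>"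
  define x where "x = real k * \<phi> - real j * \<phi>"
  define c :: real where "c = (if s then 1 else -1) * (if t then 1 else -1)"
  have c: "c = 1 \<or> c = -1" unfolding c_def by auto
  have e: "\<And>r. exp (\<i> * complex_of_real r) = cis r" by (simp add: cis_conv_exp)
  have s2: "(complex_of_real (sqrt 2))\<^sup>2 = 2"
    by (metis of_real_numeral of_real_power real_sqrt_pow2 zero_le_numeral)
  have "braket (basis_state \<Delta> j s) (basis_state \<Delta> k t)
      = (1 + complex_of_real c * (cnj (cis (real j * \<phi>)) * cis (real k * \<phi>))) / 2"
    unfolding braket_def basis_state_def e \<phi>_def c_def
    by (auto simp: field_simps power2_eq_square[symmetric] s2)
  also have "cnj (cis (real j * \<phi>)) * cis (real k * \<phi>) = cis x"
    by (simp add: cis_cnj cis_mult x_def)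
  finally have B: "(cmod (braket (basis_state \<Delta> j s) (basis_state \<Delta> k t)))\<^sup>2 = (1 + c * cos x) / 2"
    by (simp only: bk[OF c])
  have D: "real \<Delta> \<ge> 4" using assms(1) by simp
  have phip: "\<phi> > 0" unfolding \<phi>_def using D by simp
  have "\<bar>x\<bar> = real (if k > j then k - j else j - k) * \<phi>"
    unfolding x_def using phip by (auto simp: abs_if algebra_simps of_nat_diff)
  moreover have "(if k > j then k - j else j - k) \<ge> 1" using assms(5) by auto
  moreover have "2 * (if k > j then k - j else j - k) \<le> \<Delta>" using assms(2-4) by auto
  ultimately obtain d :: nat where dx: "\<bar>x\<bar> = real d * \<phi>" and d1: "d \<ge> 1" and d2: "2 * d \<le> \<Delta>"
    by blast
  have lo: "\<bar>x\<bar> \<ge> \<phi>" using dx d1 phip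
    by (metis mult_le_cancel_right1 of_nat_1 of_nat_mono less_le_not_le)
  have "real (2 * d) * \<phi> \<le> real \<Delta> * \<phi>" using d2 phip by (intro mult_right_mono) auto
  also have "real \<Delta> * \<phi> = pi" unfolding \<phi>_def using D by simp
  finally have hi: "\<bar>x\<bar> \<le> pi / 2" using dx by simp
  have cx: "cos x \<le> cos \<phi>"
    using cos_monotone_0_pi_le[of \<phi> "\<bar>x\<bar>"] lo hi phip by (simp add: cos_abs_real)
  have cx2: "cos x \<ge> 0" using hi cos_ge_zero[of "\<bar>x\<bar>"] by (simp add: cos_abs_real)
  have cp: "cos \<phi> \<ge> 0" using lo hi phip cos_ge_zero[of \<phi>] by simp
  have "(cos (pi / (2 * real \<Delta>)))\<^sup>2 = (1 + cos \<phi>) / 2"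
  proof -
    have "cos \<phi> = cos (2 * (pi / (2 * real \<Delta>)))" unfolding \<phi>_def by simp
    also have "\<dots> = 2 * (cos (pi / (2 * real \<Delta>)))\<^sup>2 - 1" by (rule cos_double_cos)
    finally show ?thesis by simp
  qed
  then show ?thesis using B c cx cx2 cp by auto
qed

end
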